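(* Let $(\rhd,\nu,\phi)$ and $(\rhd,\nu,\phi')$ be two persistent craving representations (same $\rhd$ and $\nu$) with associated random choice rules $p$ and $p'$. Let $x\in X$ and $y\in X\setminus\{x\}$ with $y\ne M(\rhd,X\setminus\{x\})$. Then $$p(y,X)-p(y,X\setminus\{x\})>p'(y,X)-p'(y,X\setminus\{x\})$$ if and only if $\phi(M(\rhd,X\setminus\{x\}),x)>\phi'(M(\rhd,X\setminus\{x\}),x)$.
   Context: $X$ is a finite set, $\mathcal{X}$ its nonempty subsets, $\mathcal{L}(X)$ its linear orders, $M(\succ,A)$ the $\succ$-maximal element of $A$, $N(x,A)=\{\succ: x\succ y\ \forall y\in A\setminus\{x\}\}$. Given a linear order $\rhd$, the craving preferences $\{\succ_x\}_{x\in X}$ are: $x\succ_x y$ for all $y\neq x$, and for $y,z\ne x$, $y\succ_x z$ iff $y\rhd z$. A distribution $\nu$ supported on $\{\succ_x\}$ is craving monotonic w.r.t. $\rhd$ if $x\rhd y$ implies $\nu(\succ_x)>\nu(\succ_y)>0$. A persistence function is $\phi:X^2\to[0,1)$ with $\phi(x,x)=0$, $\phi(x,y)>0$ for $x\ne y$. A persistent craving representation $(\rhd,\nu,\phi)$ (with $\nu$ craving monotonic) determines the transition function $t(x,\succ_y)=\phi(x,y)\delta_{\succ_y}+(1-\phi(x,y))\nu$, $t(x,\succ)=\nu$ for $\succ$ outside the support of $\nu$; for each $A\in\mathcal{X}$, $\nu_A$ is the unique stationary distribution of the chain $m_A(\succ,\succ')=t_{\succ'}(M(\succ,A),\succ)$,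 and the associated random choice rule is $p(x,A)=\sum_{\succ\in N(x,A)}\nu_A(\succ)$. *)

theory Defs
  imports Complex_Main
begin

(* Preferences are strict linear orders on the finite ground set X, as relations;
   (a,b) \<in> r means "a is strictly preferred to b". *)
definition LinOrd :: "'a set \<Rightarrow> 'a rel set" where
  "LinOrd X = {r. r \<subseteq> X \<times> X \<and> strict_linear_order_on X r}"

definition Mx :: "'a rel \<Rightarrow> 'a set \<Rightarrow> 'a" where
  "Mx r A = (THE x. x \<in> A \<and> (\<forall>y\<in>A - {x}. (x, y) \<in> r))"

definition Nset :: "'a set \<Rightarrow> 'a \<Rightarrow> 'a set \<Rightarrow> 'a rel set" where
  "Nset X x A = {r \<in> LinOrd X. \<forall>y\<in>A - {x}. (x, y) \<in> r}"

definition crav :: "'a set \<Rightarrow> 'a rel \<Rightarrow> 'a \<Rightarrow> 'a rel" where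
  "crav X R x = {(a, b). a \<in> X \<and> b \<in> X \<and> a \<noteq> b \<and> (a = x \<or> (b \<noteq> x \<and> (a, b) \<in> R))}"

definition is_dist :: "'a set \<Rightarrow> ('a rel \<Rightarrow> real) \<Rightarrow> bool" where
  "is_dist X \<mu> \<longleftrightarrow> (\<forall>r. r \<notin> LinOrd X \<longrightarrow> \<mu> r = 0) \<and> (\<forall>r\<in>LinOrd X. \<mu> r \<ge> 0)
      \<and> sum \<mu> (LinOrd X) = 1"

definition craving_monotonic :: "'a set \<Rightarrow> 'a rel \<Rightarrow> ('a rel \<Rightarrow> real) \<Rightarrow> bool" where
  "craving_monotonic X R \<nu> \<longleftrightarrow>
     is_dist X \<nu> \<and> (\<forall>r. \<nu> r \<noteq> 0 \<longrightarrow> (\<exists>x\<in>X. r = crav X R x))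
     \<and> (\<forall>x\<in>X. \<forall>y\<in>X. (x, y) \<in> R \<longrightarrow> \<nu> (crav X R x) > \<nu> (crav X R y) \<and> \<nu> (crav X R y) > 0)"

definition persistence :: "'a set \<Rightarrow> ('a \<Rightarrow> 'a \<Rightarrow> real) \<Rightarrow> bool" where
  "persistence X \<phi> \<longleftrightarrow> (\<forall>x\<in>X. \<forall>y\<in>X. 0 \<le> \<phi> x y \<and> \<phi> x y < 1)
     \<and> (\<forall>x\<in>X. \<phi> x x = 0) \<and> (\<forall>x\<in>X. \<forall>y\<in>X. x \<noteq> y \<longrightarrow> \<phi> x y > 0)"

definition pcr :: "'a set \<Rightarrow> 'a rel \<Rightarrow> ('a rel \<Rightarrow> real) \<Rightarrow> ('a \<Rightarrow> 'a \<Rightarrow> real) \<Rightarrow> bool" where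
  "pcr X R \<nu> \<phi> \<longleftrightarrow> finite X \<and> R \<in> LinOrd X \<and> craving_monotonic X R \<nu> \<and> persistence X \<phi>"

(* transition function: tr X R nu phi x r r' = t(x, r)(r') *)
definition tr :: "'a set \<Rightarrow> 'a rel \<Rightarrow> ('a rel \<Rightarrow> real) \<Rightarrow> ('a \<Rightarrow> 'a \<Rightarrow> real)
                  \<Rightarrow> 'a \<Rightarrow> 'a rel \<Rightarrow> 'a rel \<Rightarrow> real" where
  "tr X R \<nu> \<phi> x r r' =
     (if (\<exists>y\<in>X. r = crav X R y) \<and> \<nu> r \<noteq> 0 then
        (let y = (THE y. y \<in> X \<and> r = crav X R y) in
           \<phi> x y * (if r' = r then 1 else 0) + (1 - \<phi> x y) * \<nu> r')
      else \<nu> r')"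

definition mA :: "'a set \<Rightarrow> 'a rel \<Rightarrow> ('a rel \<Rightarrow> real) \<Rightarrow> ('a \<Rightarrow> 'a \<Rightarrow> real)
                  \<Rightarrow> 'a set \<Rightarrow> 'a rel \<Rightarrow> 'a rel \<Rightarrow> real" where
  "mA X R \<nu> \<phi> A r r' = tr X R \<nu> \<phi> (Mx r A) r r'"

definition stationary :: "'a set \<Rightarrow> ('a rel \<Rightarrow> 'a rel \<Rightarrow> real) \<Rightarrow> ('a rel \<Rightarrow> real) \<Rightarrow> bool" where
  "stationary X m \<mu> \<longleftrightarrow> is_dist X \<mu> \<and>
     (\<forall>r'\<in>LinOrd X. \<mu> r' = (\<Sum>r\<in>LinOrd X. \<mu> r * m r r'))"

definition nuA :: "'a set \<Rightarrow> 'a rel \<Rightarrow> ('a rel \<Rightarrow> real) \<Rightarrow> ('a \<Rightarrow> 'a \<Rightarrow> real)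
                   \<Rightarrow> 'a set \<Rightarrow> 'a rel \<Rightarrow> real" where
  "nuA X R \<nu> \<phi> A = (THE \<mu>. stationary X (mA X R \<nu> \<phi> A) \<mu>)"

definition pchoice :: "'a set \<Rightarrow> 'a rel \<Rightarrow> ('a rel \<Rightarrow> real) \<Rightarrow> ('a \<Rightarrow> 'a \<Rightarrow> real)
                       \<Rightarrow> 'a \<Rightarrow> 'a set \<Rightarrow> real" where
  "pchoice X R \<nu> \<phi> x A = (\<Sum>r\<in>Nset X x A. nuA X R \<nu> \<phi> A r)"

end

theory Submission imports Defs begin

lemma LinOrd_D0:
  assumes "r \<in> LinOrd X"
  shows "r \<subseteq> X \<times> X" "trans r" "irrefl r" "total_on X r"
  using assms by (simp_all add: LinOrd_def strict_linear_order_on_def)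

lemma LinOrd_D:
  assumes "r \<in> LinOrd X"
  shows "r \<subseteq> X \<times> X" "\<And>a b c. (a,b) \<in> r \<Longrightarrow> (b,c) \<in> r \<Longrightarrow> (a,c) \<in> r"
    "\<And>a. (a,a) \<notin> r" "\<And>a b. a \<in> X \<Longrightarrow> b \<in> X \<Longrightarrow> a \<noteq> b \<Longrightarrow> (a,b) \<in> r \<or> (b,a) \<in> r"
proof -
  note h = LinOrd_D0[OF assms]
  show "r \<subseteq> X \<times> X" by (rule h(1))
  show "\<And>a b c. (a,b) \<in> r \<Longrightarrow> (b,c) \<in> r \<Longrightarrow> (a,c) \<in> r" using h(2) by (rule transD)
  show "\<And>a. (a,a) \<notin> r" using h(3) by (simp add: irrefl_def)
  show "\<And>a b. a \<in> X \<Longrightarrow> b \<in> X \<Longrightarrow> a \<noteq> b \<Longrightarrow> (a,b) \<in> r \<or> (b,a) \<in> r"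
    using h(4) by (simp add: total_on_def)
qed

lemma LinOrd_asym: "r \<in> LinOrd X \<Longrightarrow> (a,b) \<in> r \<Longrightarrow> (b,a) \<notin> r"
proof
  assume "r \<in> LinOrd X" "(a,b) \<in> r" "(b,a) \<in> r"
  then have "(a,a) \<in> r" using LinOrd_D(2) by metis
  then show False using LinOrd_D(3) \<open>r \<in> LinOrd X\<close> by metis
qed

lemma LinOrd_I:
  assumes "r \<subseteq> X \<times> X" "\<And>a b c. (a,b) \<in> r \<Longrightarrow> (b,c) \<in> r \<Longrightarrow> (a,c) \<in> r"
    "\<And>a. (a,a) \<notin> r" "\<And>a b. a \<in> X \<Longrightarrow> b \<in> X \<Longrightarrow> a \<noteq> b \<Longrightarrow> (a,b) \<in> r \<or> (b,a) \<in> r"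
  shows "r \<in> LinOrd X"
proof -
  have "trans r" using assms(2) by (rule transI)
  moreover have "irrefl r" using assms(3) by (simp add: irrefl_def)
  moreover have "total_on X r" using assms(4) by (simp add: total_on_def)
  ultimately show ?thesis using assms(1) by (simp add: LinOrd_def strict_linear_order_on_def)
qed

lemma crav_LinOrd:
  assumes "R \<in> LinOrd X"
  shows "crav X R z \<in> LinOrd X"
proof (rule LinOrd_I)
  show "crav X R z \<subseteq> X \<times> X" unfolding crav_def by auto
  show "(a,a) \<notin> crav X R z" for a unfolding crav_def by auto
  show "(a,b) \<in> crav X R z \<or> (b,a) \<in> crav X R z" if "a \<in> X" "b \<in> X" "a \<noteq> b" for a b
    using that LinOrd_D(4)[OF assms, of a b] unfolding crav_def by auto
  show "(a,c) \<in> crav X R z" if "(a,b) \<in> crav X R z" "(b,c) \<in> crav X R z" for a b c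
    using that LinOrd_D(2)[OF assms, of a b c] LinOrd_asym[OF assms, of a b] unfolding crav_def by auto
qed

lemma crav_inj: "inj_on (crav X R) X"
proof (rule inj_onI)
  fix z w assume "z \<in> X" "w \<in> X" "crav X R z = crav X R w"
  show "z = w"
  proof (rule ccontr)
    assume "z \<noteq> w"
    then have "(z,w) \<in> crav X R z" using \<open>z \<in> X\<close> \<open>w \<in> X\<close> unfolding crav_def by auto
    moreover have "(z,w) \<notin> crav X R w" unfolding crav_def by auto
    ultimately show False using \<open>crav X R z = crav X R w\<close> by simp
  qed
qed

lemma crav_the: "z \<in> X \<Longrightarrow> (THE y. y \<in> X \<and> crav X R z = crav X R y) = z"
  using crav_inj[of X R] by (auto intro!: the_equality dest: inj_onD)

lemma Mx_eq:
  assumes "r \<in> LinOrd X" "A \<subseteq> X" "m \<in> A" "\<forall>v\<in>A-{m}. (m,v) \<in> r"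
  shows "Mx r A = m"
  unfolding Mx_def
proof (rule the_equality)
  show "m \<in> A \<and> (\<forall>v\<in>A-{m}. (m,v) \<in> r)" using assms by blast
  fix m' assume h: "m' \<in> A \<and> (\<forall>v\<in>A-{m'}. (m',v) \<in> r)"
  show "m' = m"
  proof (rule ccontr)
    assume "m' \<noteq> m"
    then have "(m',m) \<in> r" "(m,m') \<in> r" using h assms by auto
    then show False using LinOrd_asym[OF assms(1)] by blast
  qed
qed

lemma max_ex:
  assumes "r \<in> LinOrd X" "finite A" "A \<noteq> {}" "A \<subseteq> X"
  shows "\<exists>m\<in>A. \<forall>v\<in>A-{m}. (m,v) \<in> r"
  using assms(2,3,4)
proof (induction A rule: finite_ne_induct)
  case (singleton x) then show ?case by auto
next
  case (insert a F)
  then obtain m where m: "m \<in> F" "\<forall>v\<in>F-{m}. (m,v) \<in> r" by auto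
  show ?case
  proof (cases "(a,m) \<in> r")
    case True
    then show ?thesis using m LinOrd_D(2)[OF assms(1)] by (intro bexI[of _ a]) auto
  next
    case False
    then have "(m,a) \<in> r" using LinOrd_D(4)[OF assms(1), of a m] insert m by auto
    then show ?thesis using m by (intro bexI[of _ m]) auto
  qed
qed

lemma Mx_R:
  assumes "r \<in> LinOrd X" "finite A" "A \<noteq> {}" "A \<subseteq> X"
  shows "Mx r A \<in> A" "\<forall>v\<in>A-{Mx r A}. (Mx r A,v) \<in> r"
proof -
  obtain m where "m\<in>A" "\<forall>v\<in>A-{m}. (m,v) \<in> r" using max_ex[OF assms] by blast
  moreover then have "Mx r A = m" using Mx_eq assms by metis
  ultimately show "Mx r A \<in> A" "\<forall>v\<in>A-{Mx r A}. (Mx r A,v) \<in> r" by auto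
qed

lemma Mx_crav_in:
  assumes "R \<in> LinOrd X" "A \<subseteq> X" "z \<in> A"
  shows "Mx (crav X R z) A = z"
  by (rule Mx_eq[OF crav_LinOrd[OF assms(1)] assms(2,3)]) (use assms in \<open>auto simp: crav_def\<close>)

lemma Mx_crav_out:
  assumes "R \<in> LinOrd X" "finite A" "A \<noteq> {}" "A \<subseteq> X" "z \<notin> A"
  shows "Mx (crav X R z) A = Mx R A"
  using Mx_R[OF assms(1-4)] assms
  by (intro Mx_eq[OF crav_LinOrd[OF assms(1)] assms(4)]) (auto simp: crav_def)


lemma finite_LinOrd: "finite X \<Longrightarrow> finite (LinOrd X)"
  by (rule finite_subset[of _ "Pow (X \<times> X)"]) (auto simp: LinOrd_def)

locale setting =
  fixes X :: "'a set" and R \<nu> \<phi> A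
  assumes P: "pcr X R \<nu> \<phi>" and AX: "A \<subseteq> X" and Ane: "A \<noteq> {}"
    and two: "\<exists>a\<in>X. \<exists>b\<in>X. a \<noteq> b"
begin

abbreviation "C \<equiv> crav X R"
definition "c z = \<phi> (Mx (C z) A) z"
definition "S = (\<Sum>z\<in>X. \<nu> (C z) / (1 - c z))"
definition "w z = \<nu> (C z) / (1 - c z) / S"
definition "\<mu>0 r = (if \<exists>z\<in>X. r = C z then w (THE z. z \<in> X \<and> r = C z) else 0)"

lemma finX: "finite X" and RL: "R \<in> LinOrd X" and CM: "craving_monotonic X R \<nu>"
  and PS: "persistence X \<phi>"
  using P unfolding pcr_def by auto

lemma finA: "finite A" using finX AX finite_subset by blast

lemma CL: "C z \<in> LinOrd X" using crav_LinOrd[OF RL] .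

lemma CX: "C ` X \<subseteq> LinOrd X" using CL by auto

lemma nu_pos: "z \<in> X \<Longrightarrow> \<nu> (C z) > 0"
proof -
  assume z: "z \<in> X"
  obtain v where v: "v \<in> X" "v \<noteq> z" using two by blast
  then have "(z,v) \<in> R \<or> (v,z) \<in> R" using LinOrd_D(4)[OF RL] z by blast
  then show ?thesis using CM z v unfolding craving_monotonic_def by force
qed

lemma nu_zero: "r \<notin> C ` X \<Longrightarrow> \<nu> r = 0"
  using CM unfolding craving_monotonic_def by blast

lemma sum_red:
  assumes "\<And>r. r \<in> LinOrd X \<Longrightarrow> r \<notin> C ` X \<Longrightarrow> f r = 0"
  shows "(\<Sum>r\<in>LinOrd X. f r) = (\<Sum>z\<in>X. f (C z))"
proof -
  have "(\<Sum>r\<in>LinOrd X. f r) = (\<Sum>r\<in>C ` X. f r)"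
    by (rule sum.mono_neutral_right[OF finite_LinOrd[OF finX] CX]) (use assms in auto)
  also have "\<dots> = (\<Sum>z\<in>X. f (C z))" by (rule sum.reindex[OF crav_inj, unfolded comp_def])
  finally show ?thesis .
qed

lemma nu_sum: "(\<Sum>z\<in>X. \<nu> (C z)) = 1"
proof -
  have "(\<Sum>r\<in>LinOrd X. \<nu> r) = 1" using CM unfolding craving_monotonic_def is_dist_def by blast
  then show ?thesis using sum_red[of \<nu>] nu_zero by simp
qed

lemma c_range: "z \<in> X \<Longrightarrow> 0 \<le> c z \<and> c z < 1"
proof -
  assume z: "z \<in> X"
  have "Mx (C z) A \<in> X" using Mx_R(1)[OF CL finA Ane AX] AX by blast
  then show ?thesis using PS z unfolding persistence_def c_def by blast
qed

lemma S_pos: "S > 0"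
proof -
  obtain a where "a \<in> X" using two by blast
  have "\<nu> (C z) / (1 - c z) > 0" if "z \<in> X" for z using nu_pos[OF that] c_range[OF that] by simp
  then have "S > 0" unfolding S_def using \<open>a \<in> X\<close> finX
    by (intro sum_pos) auto
  then show ?thesis .
qed

lemma mA_C:
  assumes "z \<in> X"
  shows "mA X R \<nu> \<phi> A (C z) r' = c z * (if r' = C z then 1 else 0) + (1 - c z) * \<nu> r'"
proof -
  have "\<nu> (C z) \<noteq> 0" using nu_pos[OF assms] by simp
  then show ?thesis using assms unfolding mA_def tr_def c_def by (auto simp: crav_the Let_def)
qed

lemma mA_zero:
  assumes "r' \<notin> C ` X"
  shows "mA X R \<nu> \<phi> A r r' = 0"
  using assms nu_zero[OF assms] unfolding mA_def tr_def by (auto simp: Let_def)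

lemma mu0_C: "z \<in> X \<Longrightarrow> \<mu>0 (C z) = w z"
  unfolding \<mu>0_def using crav_the[of z X R] by auto

lemma mu0_zero: "r \<notin> C ` X \<Longrightarrow> \<mu>0 r = 0"
  unfolding \<mu>0_def by auto

lemma sum_w: "(\<Sum>z\<in>X. w z) = 1"
proof -
  have "(\<Sum>z\<in>X. w z) = (\<Sum>z\<in>X. \<nu> (C z) / (1 - c z)) / S"
    unfolding w_def by (rule sum_divide_distrib[symmetric])
  then show ?thesis using S_pos unfolding S_def by simp
qed

lemma stat_mu0: "stationary X (mA X R \<nu> \<phi> A) \<mu>0"
  unfolding stationary_def is_dist_def
proof (intro conjI ballI allI impI)
  show "\<mu>0 r = 0" if "r \<notin> LinOrd X" for r using that CX mu0_zero by blast
  show "0 \<le> \<mu>0 r" for r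
  proof (cases "r \<in> C ` X")
    case True
    then obtain z where z: "z \<in> X" "r = C z" by blast
    have "w z > 0" unfolding w_def using S_pos nu_pos[OF z(1)] c_range[OF z(1)] by simp
    then show ?thesis using mu0_C z by simp
  next
    case False then show ?thesis using mu0_zero by simp
  qed
  show "sum \<mu>0 (LinOrd X) = 1"
    using sum_red[of \<mu>0] mu0_zero mu0_C sum_w by simp
  fix r' assume r': "r' \<in> LinOrd X"
  have "(\<Sum>r\<in>LinOrd X. \<mu>0 r * mA X R \<nu> \<phi> A r r')
      = (\<Sum>z\<in>X. w z * (c z * (if r' = C z then 1 else 0) + (1 - c z) * \<nu> r'))"
    using sum_red[of "\<lambda>r. \<mu>0 r * mA X R \<nu> \<phi> A r r'"] mu0_zero mu0_C mA_C by simp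
  also have "\<dots> = (\<Sum>z\<in>X. w z * c z * (if r' = C z then 1 else 0) + w z * (1 - c z) * \<nu> r')"
    by (intro sum.cong refl) (simp add: algebra_simps)
  also have "\<dots> = (\<Sum>z\<in>X. w z * c z * (if r' = C z then 1 else 0)) + (\<Sum>z\<in>X. w z * (1 - c z)) * \<nu> r'"
    by (simp add: sum.distrib sum_distrib_right)
  also have "(\<Sum>z\<in>X. w z * (1 - c z)) = 1 / S"
  proof -
    have "(\<Sum>z\<in>X. w z * (1 - c z)) = (\<Sum>z\<in>X. \<nu> (C z) / S)"
    proof (rule sum.cong[OF refl])
      fix z assume "z \<in> X"
      then have "1 - c z \<noteq> 0" using c_range by force
      then show "w z * (1 - c z) = \<nu> (C z) / S" unfolding w_def using S_pos by (simp add: field_simps)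
    qed
    then show ?thesis using nu_sum by (simp add: sum_divide_distrib[symmetric])
  qed
  finally have eq: "(\<Sum>r\<in>LinOrd X. \<mu>0 r * mA X R \<nu> \<phi> A r r')
      = (\<Sum>z\<in>X. w z * c z * (if r' = C z then 1 else 0)) + \<nu> r' / S" by simp
  show "\<mu>0 r' = (\<Sum>r\<in>LinOrd X. \<mu>0 r * mA X R \<nu> \<phi> A r r')"
  proof (cases "r' \<in> C ` X")
    case False
    then have "(\<Sum>z\<in>X. w z * c z * (if r' = C z then 1 else 0)) = 0" by (intro sum.neutral) auto
    then show ?thesis using eq False mu0_zero nu_zero by simp
  next
    case True
    then obtain v where v: "v \<in> X" "r' = C v" by blast
    have "(\<Sum>z\<in>X. w z * c z * (if r' = C z then 1 else 0)) = (\<Sum>z\<in>X. if z = v then w z * c z else 0)"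
      using v crav_inj[of X R] by (intro sum.cong) (auto dest: inj_onD)
    also have "\<dots> = w v * c v" using v finX by simp
    finally have "(\<Sum>r\<in>LinOrd X. \<mu>0 r * mA X R \<nu> \<phi> A r r') = w v * c v + \<nu> (C v) / S"
      using eq v by simp
    also have "\<dots> = w v" using c_range[OF v(1)] S_pos unfolding w_def by (simp add: field_simps)
    finally show ?thesis using mu0_C v by simp
  qed
qed

lemma stat_unique:
  assumes st: "stationary X (mA X R \<nu> \<phi> A) \<mu>"
  shows "\<mu> = \<mu>0"
proof -
  have d: "is_dist X \<mu>" and eqn: "\<And>r'. r' \<in> LinOrd X \<Longrightarrow> \<mu> r' = (\<Sum>r\<in>LinOrd X. \<mu> r * mA X R \<nu> \<phi> A r r')"
    using st unfolding stationary_def by auto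
  have z: "\<mu> r = 0" if "r \<notin> C ` X" for r
  proof (cases "r \<in> LinOrd X")
    case True then show ?thesis using eqn[OF True] mA_zero[OF that] by simp
  next
    case False then show ?thesis using d unfolding is_dist_def by blast
  qed
  define K where "K = (\<Sum>z\<in>X. \<mu> (C z) * (1 - c z))"
  have key: "\<mu> (C v) = \<mu> (C v) * c v + K * \<nu> (C v)" if v: "v \<in> X" for v
  proof -
    have "\<mu> (C v) = (\<Sum>z\<in>X. \<mu> (C z) * (c z * (if C v = C z then 1 else 0) + (1 - c z) * \<nu> (C v)))"
      using eqn[OF CL] sum_red[of "\<lambda>r. \<mu> r * mA X R \<nu> \<phi> A r (C v)"] z mA_C by simp
    also have "\<dots> = (\<Sum>z\<in>X. \<mu> (C z) * c z * (if C v = C z then 1 else 0) + \<mu> (C z) * (1 - c z) * \<nu> (C v))"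
      by (intro sum.cong refl) (simp add: algebra_simps)
    also have "\<dots> = (\<Sum>z\<in>X. \<mu> (C z) * c z * (if C v = C z then 1 else 0)) + K * \<nu> (C v)"
      unfolding K_def by (simp add: sum.distrib sum_distrib_right)
    also have "(\<Sum>z\<in>X. \<mu> (C z) * c z * (if C v = C z then 1 else 0)) = (\<Sum>z\<in>X. if z = v then \<mu> (C z) * c z else 0)"
      using v crav_inj[of X R] by (intro sum.cong) (auto dest: inj_onD)
    also have "\<dots> = \<mu> (C v) * c v" using v finX by simp
    finally show ?thesis .
  qed
  have mv: "\<mu> (C v) = K * (\<nu> (C v) / (1 - c v))" if v: "v \<in> X" for v
    using key[OF v] c_range[OF v] by (simp add: field_simps)
  have "(\<Sum>r\<in>LinOrd X. \<mu> r) = 1" using d unfolding is_dist_def by blast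
  then have "(\<Sum>z\<in>X. \<mu> (C z)) = 1" using sum_red[of \<mu>] z by simp
  also have "(\<Sum>z\<in>X. \<mu> (C z)) = K * S" unfolding S_def using mv by (simp add: sum_distrib_left)
  finally have KS: "K = 1 / S" using S_pos by (simp add: field_simps)
  show ?thesis
  proof
    fix r show "\<mu> r = \<mu>0 r"
    proof (cases "r \<in> C ` X")
      case True
      then obtain v where v: "v \<in> X" "r = C v" by blast
      then show ?thesis using mv[OF v(1)] mu0_C[OF v(1)] KS unfolding w_def by simp
    next
      case False then show ?thesis using z mu0_zero by simp
    qed
  qed
qed

lemma nuA_eq: "nuA X R \<nu> \<phi> A = \<mu>0"
  unfolding nuA_def using stat_mu0 stat_unique by blast


lemma Nset_C:
  assumes z: "z \<in> X" and y: "y \<in> A" and nm: "A \<noteq> X \<Longrightarrow> y \<noteq> Mx R A"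
  shows "C z \<in> Nset X y A \<longleftrightarrow> z = y"
proof
  assume "z = y" then show "C z \<in> Nset X y A"
    using CL AX y unfolding Nset_def crav_def by auto
next
  assume N: "C z \<in> Nset X y A"
  then have N': "\<forall>v\<in>A-{y}. (y,v) \<in> C z" unfolding Nset_def by blast
  show "z = y"
  proof (rule ccontr)
    assume zy: "z \<noteq> y"
    show False
    proof (cases "z \<in> A")
      case True
      then have "(y,z) \<in> C z" using N' zy by blast
      then show False unfolding crav_def by auto
    next
      case False
      then have "A \<noteq> X" using z by blast
      then have m: "y \<noteq> Mx R A" using nm by blast
      have mA: "Mx R A \<in> A" "\<forall>v\<in>A-{Mx R A}. (Mx R A,v) \<in> R" using Mx_R[OF RL finA Ane AX] by auto
      then have "(Mx R A, y) \<in> R" using m y by blast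
      moreover have "(y, Mx R A) \<in> C z" using N' mA m by blast
      then have "(y, Mx R A) \<in> R" using False mA(1) zy unfolding crav_def by auto
      ultimately show False using LinOrd_asym[OF RL] by blast
    qed
  qed
qed

lemma pchoice_eq:
  assumes y: "y \<in> A" and nm: "A \<noteq> X \<Longrightarrow> y \<noteq> Mx R A"
  shows "pchoice X R \<nu> \<phi> y A = \<nu> (C y) / S"
proof -
  have yX: "y \<in> X" using y AX by blast
  have "pchoice X R \<nu> \<phi> y A = (\<Sum>r\<in>Nset X y A. \<mu>0 r)" unfolding pchoice_def nuA_eq ..
  also have "\<dots> = (\<Sum>r\<in>LinOrd X. if r \<in> Nset X y A then \<mu>0 r else 0)"
    by (rule sum.mono_neutral_cong_left[OF finite_LinOrd[OF finX]]) (auto simp: Nset_def)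
  also have "\<dots> = (\<Sum>z\<in>X. if C z \<in> Nset X y A then \<mu>0 (C z) else 0)"
    by (rule sum_red) (use mu0_zero in auto)
  also have "\<dots> = (\<Sum>z\<in>X. if z = y then w z else 0)"
    using Nset_C[OF _ y nm] mu0_C by (intro sum.cong) auto
  also have "\<dots> = w y" using yX finX by simp
  also have "c y = 0" using Mx_crav_in[OF RL AX y] PS yX unfolding c_def persistence_def by auto
  then have "w y = \<nu> (C y) / S" unfolding w_def by simp
  finally show ?thesis .
qed

end

lemma S_X: "setting X R \<nu> \<phi> X \<Longrightarrow> setting.S X R \<nu> \<phi> X = 1"
proof -
  assume s: "setting X R \<nu> \<phi> X"
  interpret setting X R \<nu> \<phi> X by (rule s)
  have "c z = 0" if "z \<in> X" for z
    using Mx_crav_in[OF RL _ that] PS that unfolding c_def persistence_def by auto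
  then show ?thesis unfolding S_def using nu_sum by simp
qed

lemma S_Xx:
  assumes s: "setting X R \<nu> \<phi> (X - {x})" and x: "x \<in> X"
  shows "setting.S X R \<nu> \<phi> (X - {x}) = 1 - \<nu> (crav X R x) + \<nu> (crav X R x) / (1 - \<phi> (Mx R (X - {x})) x)"
proof -
  interpret setting X R \<nu> \<phi> "X - {x}" by (rule s)
  have c0: "c z = 0" if "z \<in> X - {x}" for z
    using Mx_crav_in[OF RL _ that] PS that unfolding c_def persistence_def by auto
  have cx: "c x = \<phi> (Mx R (X - {x})) x"
    unfolding c_def using Mx_crav_out[OF RL _ Ane, of x] finX by auto
  have "S = \<nu> (C x) / (1 - c x) + (\<Sum>z\<in>X-{x}. \<nu> (C z) / (1 - c z))"
    unfolding S_def using x finX by (simp add: sum.remove)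
  also have "(\<Sum>z\<in>X-{x}. \<nu> (C z) / (1 - c z)) = (\<Sum>z\<in>X-{x}. \<nu> (C z))"
    using c0 by simp
  also have "\<dots> = 1 - \<nu> (C x)" using nu_sum x finX by (simp add: sum.remove)
  finally show ?thesis using cx by simp
qed

theorem proposition2:
  fixes X :: "'a set" and R :: "'a rel" and \<nu> :: "'a rel \<Rightarrow> real"
    and \<phi> \<phi>' :: "'a \<Rightarrow> 'a \<Rightarrow> real" and x y :: 'a
  assumes "pcr X R \<nu> \<phi>" and "pcr X R \<nu> \<phi>'"
    and "x \<in> X" and "y \<in> X - {x}" and "y \<noteq> Mx R (X - {x})"
  shows "pchoice X R \<nu> \<phi> y X - pchoice X R \<nu> \<phi> y (X - {x})
           > pchoice X R \<nu> \<phi>' y X - pchoice X R \<nu> \<phi>' y (X - {x})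
         \<longleftrightarrow> \<phi> (Mx R (X - {x})) x > \<phi>' (Mx R (X - {x})) x"
proof -
  have two: "\<exists>a\<in>X. \<exists>b\<in>X. a \<noteq> b" using assms(3,4) by blast
  have ne: "X - {x} \<noteq> {}" using assms(4) by blast
  interpret a: setting X R \<nu> \<phi> X using assms(1) two assms(3) by unfold_locales auto
  interpret b: setting X R \<nu> \<phi> "X - {x}" using assms(1) two ne by unfold_locales auto
  interpret a': setting X R \<nu> \<phi>' X using assms(2) two assms(3) by unfold_locales auto
  interpret b': setting X R \<nu> \<phi>' "X - {x}" using assms(2) two ne by unfold_locales auto
  define n where "n = \<nu> (crav X R y)"
  define q where "q = \<nu> (crav X R x)"
  define u where "u = \<phi> (Mx R (X - {x})) x"
  define u' where "u' = \<phi>' (Mx R (X - {x})) x"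
  have yX: "y \<in> X" using assms(4) by blast
  have n: "n > 0" unfolding n_def using a.nu_pos[OF yX] .
  have q: "q > 0" unfolding q_def using a.nu_pos[OF assms(3)] .
  have mX: "Mx R (X - {x}) \<in> X" using Mx_R(1)[OF a.RL b.finA ne] by blast
  have mx: "Mx R (X - {x}) \<noteq> x" using Mx_R(1)[OF a.RL b.finA ne] by blast
  have u: "0 \<le> u" "u < 1" using a.PS mX assms(3) unfolding u_def persistence_def by auto
  have u': "0 \<le> u'" "u' < 1" using a'.PS mX assms(3) unfolding u'_def persistence_def by auto
  have p1: "pchoice X R \<nu> \<phi> y X = n" using a.pchoice_eq[OF yX] S_X[OF a.setting_axioms] n_def by simp
  have p1': "pchoice X R \<nu> \<phi>' y X = n" using a'.pchoice_eq[OF yX] S_X[OF a'.setting_axioms] n_def by simp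
  define T where "T = 1 - q + q / (1 - u)"
  define T' where "T' = 1 - q + q / (1 - u')"
  have p2: "pchoice X R \<nu> \<phi> y (X - {x}) = n / T"
    using b.pchoice_eq[OF assms(4,5)] S_Xx[OF b.setting_axioms assms(3)] n_def q_def u_def T_def by simp
  have p2': "pchoice X R \<nu> \<phi>' y (X - {x}) = n / T'"
    using b'.pchoice_eq[OF assms(4,5)] S_Xx[OF b'.setting_axioms assms(3)] n_def q_def u'_def T'_def by simp
  have T: "T > 0" using b.S_pos S_Xx[OF b.setting_axioms assms(3)] q_def u_def T_def by simp
  have T': "T' > 0" using b'.S_pos S_Xx[OF b'.setting_axioms assms(3)] q_def u'_def T'_def by simp
  have "n - n / T > n - n / T' \<longleftrightarrow> n / T < n / T'" by linarith
  also have "\<dots> \<longleftrightarrow> n * T' < n * T" using T T' by (simp add: field_simps)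
  also have "\<dots> \<longleftrightarrow> T' < T" using n by simp
  also have "\<dots> \<longleftrightarrow> q / (1 - u') < q / (1 - u)" unfolding T_def T'_def by linarith
  also have "\<dots> \<longleftrightarrow> u' < u" using q u u' by (simp add: field_simps)
  finally show ?thesis using p1 p1' p2 p2' u_def u'_def by simp
qed

end
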